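(* Let $p$ be a $\mathbb Z_2$-homogeneous monic element of $\mathcal{A}_E$ such that the associative composition $(p,t_{ij})_w$ is defined for some $w\in X^*$, where $t_{ij}=[e_i,f_j]-\delta_{ij}h_i$. Then $(p,t_{ij})_w\equiv(p)\tilde\partial_j\bmod(\{p\}\cup W,w)$.
   Context: Let $k$ be a field with $\mathrm{char}(k)\ne2,3$. $\Omega=\{1,\dots,r\}$, $\tau\subseteq\Omega$, $A=(a_{ij})_{i,j\in\Omega}$ a generalized Cartan matrix (entries $a_{ii}\in\{0,2\}$ with $a_{ii}=0\Rightarrow i\in\tau$; $a_{ij}\in\mathbb Z_{\le0}$ for $j\neq i$ when $a_{ii}\ne0$; $a_{ij}=0\Rightarrow a_{ji}=0$; $a_{ii}=2$, $i\in\tau\Rightarrow a_{ij}\in2\mathbb Z$). $X=E\cup H\cup F$, $E=\{e_i\}$, $H=\{h_i\}$, $F=\{f_i\}$, with $\deg i=\bar1$ iff $i\in\tau$, $\deg e_i=\deg f_i=\deg i$, $\deg h_i=\bar0$; order $e_i\succ h_j\succ f_k$ and $e_i\succ e_j$, $h_i\succ h_j$, $f_i\succ f_j$ iff $i>j$. $\mathcal A_E\subset\mathcal A_X$ are free associative algebras, with superbracket $[x,y]=xy-(-1)^{|x||y|}yx$. $W$ is the set $\{[h_i,h_j]\,(i>j),\ [e_i,f_j]-\delta_{ij}h_i,\ [e_j,h_i]+a_{ij}e_j,\ [h_i,f_j]+a_{ij}f_j\}$. The differential substitution $\tilde\partial_j$ is the linear map on $\mathcal A_E$ (with values in $\mathcal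 A_X$, written on the right) determined by $(e_i)\tilde\partial_j=\delta_{ij}h_j$ and $(uv)\tilde\partial_j=u\,(v)\tilde\partial_j+(-1)^{(\deg j)(\deg v)}(u)\tilde\partial_j\,v$ for homogeneous $u,v\in\mathcal A_E$. Orders: $X^*$ associative words; $u<1$ for nonempty $u$, $xu'<yv'$ iff $x\prec y$ or ($x=y$, $u'<v'$); $u\ll v$ iff $l(u)<l(v)$ or ($l(u)=l(v)$, $u<v$); $\bar p$ is the $\ll$-largest word of $p$, monic means its coefficient is $1$. Associative compositions of monic $p,q$: if $\bar pa=b\bar q=w$, $l(\bar p)>l(b)$: $(p,q)_w=pa-bq$; if $\bar p=a\bar qb=w$: $(p,q)_w=p-aqb$. $f\equiv g\bmod(S,w)$ means $f-g=\sum\alpha_ia_is_ib_i$ with $\alpha_i\in k$, $a_i,b_i\in X^*$, $s_i\in S$, $a_i\bar s_ib_i\ll w$. *)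

theory Defs
  imports "HOL-Library.Poly_Mapping"
begin

text \<open>Letters of X = E \<union> H \<union> F, indexed by natural numbers; only indices in
  \<Omega> = {1..r} are relevant (see wordX).\<close>
datatype letter = E nat | H nat | F nat

type_synonym word = "letter list"

text \<open>Elements of the free associative algebra A_X over k: finitely supported
  coefficient functions on words.\<close>
type_synonym 'k fa = "word \<Rightarrow>\<^sub>0 'k"

fun lrank :: "letter \<Rightarrow> nat" where
  "lrank (E _) = 2" | "lrank (H _) = 1" | "lrank (F _) = 0"

fun lidx :: "letter \<Rightarrow> nat" where
  "lidx (E i) = i" | "lidx (H i) = i" | "lidx (F i) = i"

fun isE :: "letter \<Rightarrow> bool" where
  "isE (E _) = True" | "isE _ = False"

definition lless :: "letter \<Rightarrow> letter \<Rightarrow> bool" where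
  "lless x y \<longleftrightarrow> lrank x < lrank y \<or> (lrank x = lrank y \<and> lidx x < lidx y)"

fun wless :: "word \<Rightarrow> word \<Rightarrow> bool" where
  "wless [] v = False"
| "wless (x # u) [] = True"
| "wless (x # u) (y # v) = (lless x y \<or> (x = y \<and> wless u v))"

definition dlless :: "word \<Rightarrow> word \<Rightarrow> bool" where
  "dlless u v \<longleftrightarrow> length u < length v \<or> (length u = length v \<and> wless u v)"

definition lead :: "'k::zero fa \<Rightarrow> word" where
  "lead p = (THE u. u \<in> Poly_Mapping.keys p \<and> (\<forall>v\<in>Poly_Mapping.keys p. v \<noteq> u \<longrightarrow> dlless v u))"

definition monic :: "'k::{zero,one} fa \<Rightarrow> bool" where
  "monic p \<longleftrightarrow> p \<noteq> 0 \<and> Poly_Mapping.lookup p (lead p) = 1"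

fun ldeg :: "nat set \<Rightarrow> letter \<Rightarrow> bool" where
  "ldeg \<tau> (E i) = (i \<in> \<tau>)" | "ldeg \<tau> (H i) = False" | "ldeg \<tau> (F i) = (i \<in> \<tau>)"

definition wdeg :: "nat set \<Rightarrow> word \<Rightarrow> bool" where
  "wdeg \<tau> u = odd (length (filter (ldeg \<tau>) u))"

definition homog :: "nat set \<Rightarrow> 'k::zero fa \<Rightarrow> bool" where
  "homog \<tau> p \<longleftrightarrow> (\<exists>d. \<forall>u\<in>Poly_Mapping.keys p. wdeg \<tau> u = d)"

definition sgnk :: "bool \<Rightarrow> 'k::comm_ring_1" where
  "sgnk b = (if b then -1 else 1)"

definition wordX :: "nat \<Rightarrow> word \<Rightarrow> bool" where
  "wordX r u \<longleftrightarrow> (\<forall>x\<in>set u. lidx x \<in> {1..r})"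

definition inAE :: "nat \<Rightarrow> 'k::zero fa \<Rightarrow> bool" where
  "inAE r p \<longleftrightarrow> (\<forall>u\<in>Poly_Mapping.keys p. wordX r u \<and> (\<forall>x\<in>set u. isE x))"

definition mon :: "word \<Rightarrow> 'k::comm_ring_1 fa" where
  "mon u = Poly_Mapping.single u 1"

definition wmulc :: "'k::comm_ring_1 \<Rightarrow> word \<Rightarrow> 'k fa \<Rightarrow> word \<Rightarrow> 'k fa" where
  "wmulc c a p b = (\<Sum>u\<in>Poly_Mapping.keys p. Poly_Mapping.single (a @ u @ b) (c * Poly_Mapping.lookup p u))"

definition sbr :: "nat set \<Rightarrow> word \<Rightarrow> word \<Rightarrow> 'k::comm_ring_1 fa" where
  "sbr \<tau> u v = mon (u @ v) - Poly_Mapping.single (v @ u) (sgnk (wdeg \<tau> u \<and> wdeg \<tau> v))"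

definition tt :: "nat set \<Rightarrow> nat \<Rightarrow> nat \<Rightarrow> 'k::comm_ring_1 fa" where
  "tt \<tau> i j = sbr \<tau> [E i] [F j] - (if i = j then mon [H i] else 0)"

definition Wset :: "nat \<Rightarrow> nat set \<Rightarrow> (nat \<Rightarrow> nat \<Rightarrow> int) \<Rightarrow> 'k::comm_ring_1 fa set" where
  "Wset r \<tau> A =
     {sbr \<tau> [H i] [H j] | i j. i \<in> {1..r} \<and> j \<in> {1..r} \<and> i > j}
   \<union> {tt \<tau> i j | i j. i \<in> {1..r} \<and> j \<in> {1..r}}
   \<union> {sbr \<tau> [E j] [H i] + Poly_Mapping.single [E j] (of_int (A i j)) | i j. i \<in> {1..r} \<and> j \<in> {1..r}}
   \<union> {sbr \<tau> [H i] [F j] + Poly_Mapping.single [F j] (of_int (A i j)) | i j. i \<in> {1..r} \<and> j \<in> {1..r}}"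

definition gcm :: "nat \<Rightarrow> nat set \<Rightarrow> (nat \<Rightarrow> nat \<Rightarrow> int) \<Rightarrow> bool" where
  "gcm r \<tau> A \<longleftrightarrow> \<tau> \<subseteq> {1..r}
     \<and> (\<forall>i\<in>{1..r}. A i i = 0 \<or> A i i = 2)
     \<and> (\<forall>i\<in>{1..r}. A i i = 0 \<longrightarrow> i \<in> \<tau>)
     \<and> (\<forall>i\<in>{1..r}. \<forall>j\<in>{1..r}. j \<noteq> i \<and> A i i \<noteq> 0 \<longrightarrow> A i j \<le> 0)
     \<and> (\<forall>i\<in>{1..r}. \<forall>j\<in>{1..r}. A i j = 0 \<longrightarrow> A j i = 0)
     \<and> (\<forall>i\<in>{1..r}. A i i = 2 \<and> i \<in> \<tau> \<longrightarrow> (\<forall>j\<in>{1..r}. even (A i j)))"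

text \<open>Differential substitution on words (unique solution of the defining rules, obtained
  by splitting x v = x \<cdot> v):  (x v)\<partial>_j = x (v)\<partial>_j + (-1)^{deg j deg v} (x)\<partial>_j v,
  (e_i)\<partial>_j = \<delta>_ij h_j; extended linearly.\<close>
fun dsubw :: "nat set \<Rightarrow> nat \<Rightarrow> word \<Rightarrow> 'k::comm_ring_1 fa" where
  "dsubw \<tau> j [] = 0"
| "dsubw \<tau> j (x # v) = wmulc 1 [x] (dsubw \<tau> j v) []
     + (if x = E j then Poly_Mapping.single (H j # v) (sgnk (j \<in> \<tau> \<and> wdeg \<tau> v)) else 0)"

definition dsub :: "nat set \<Rightarrow> nat \<Rightarrow> 'k::comm_ring_1 fa \<Rightarrow> 'k fa" where
  "dsub \<tau> j p = (\<Sum>u\<in>Poly_Mapping.keys p. wmulc (Poly_Mapping.lookup p u) [] (dsubw \<tau> j u) [])"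

definition is_comp :: "'k::comm_ring_1 fa \<Rightarrow> 'k fa \<Rightarrow> word \<Rightarrow> 'k fa \<Rightarrow> bool" where
  "is_comp p q w c \<longleftrightarrow>
     (\<exists>a b. lead p @ a = w \<and> b @ lead q = w \<and> length (lead p) > length b
            \<and> c = wmulc 1 [] p a - wmulc 1 b q [])
   \<or> (\<exists>a b. lead p = w \<and> a @ lead q @ b = w \<and> c = p - wmulc 1 a q b)"

definition congr :: "nat \<Rightarrow> 'k::comm_ring_1 fa \<Rightarrow> 'k fa \<Rightarrow> 'k fa set \<Rightarrow> word \<Rightarrow> bool" where
  "congr r f g S w \<longleftrightarrow> (\<exists>L :: ('k \<times> word \<times> 'k fa \<times> word) list.
      (\<forall>(\<alpha>, a, s, b)\<in>set L. wordX r a \<and> wordX r b \<and> s \<in> S \<and> dlless (a @ lead s @ b) w)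
    \<and> f - g = sum_list (map (\<lambda>(\<alpha>, a, s, b). wmulc \<alpha> a s b) L))"

end

theory Submission
  imports Defs
begin


lemma lless_irrefl: "\<not> lless x x" by (simp add: lless_def)
lemma lless_trans: "lless x y \<Longrightarrow> lless y z \<Longrightarrow> lless x z" by (auto simp: lless_def)
lemma lless_total: "x \<noteq> y \<Longrightarrow> lless x y \<or> lless y x"
  by (cases x; cases y; auto simp: lless_def)

lemma wless_irrefl: "\<not> wless u u" by (induction u) (auto simp: lless_irrefl)
lemma wless_trans: "wless u v \<Longrightarrow> wless v z \<Longrightarrow> wless u z"
proof (induction u arbitrary: v z)
  case Nil then show ?case by simp
next
  case (Cons x u)
  show ?case
  proof (cases v)
    case Nil then show ?thesis using Cons.prems by simp
  next
    case vC: (Cons y v')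
    show ?thesis
    proof (cases z)
      case Nil then show ?thesis by simp
    next
      case zC: (Cons z' z'')
      have h1: "lless x y \<or> (x = y \<and> wless u v')" using Cons.prems(1) vC by simp
      have h2: "lless y z' \<or> (y = z' \<and> wless v' z'')" using Cons.prems(2) vC zC by simp
      have "lless x z' \<or> (x = z' \<and> wless u z'')"
        using h1 h2 Cons.IH[of v' z''] lless_trans[of x y z'] by blast
      then show ?thesis using zC by simp
    qed
  qed
qed
lemma wless_total: "u \<noteq> v \<Longrightarrow> wless u v \<or> wless v u"
proof (induction u arbitrary: v)
  case Nil then show ?case by (cases v) auto
next
  case (Cons x u)
  then show ?case by (cases v) (auto dest: lless_total)
qed

lemma dl_irrefl: "\<not> dlless u u" by (simp add: dlless_def wless_irrefl)
lemma dl_trans: "dlless u v \<Longrightarrow> dlless v z \<Longrightarrow> dlless u z"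
  by (auto simp: dlless_def intro: wless_trans)
lemma dl_total: "u \<noteq> v \<Longrightarrow> dlless u v \<or> dlless v u"
  using wless_total by (auto simp: dlless_def)
lemma dl_asym: "dlless u v \<Longrightarrow> \<not> dlless v u"
  using dl_trans dl_irrefl by blast

lemma dl_max_exists: "finite S \<Longrightarrow> S \<noteq> {} \<Longrightarrow> \<exists>m\<in>S. \<forall>v\<in>S. v \<noteq> m \<longrightarrow> dlless v m"
proof (induction S rule: finite_ne_induct)
  case (singleton x) then show ?case by auto
next
  case (insert x F)
  then obtain m where m: "m \<in> F" "\<forall>v\<in>F. v \<noteq> m \<longrightarrow> dlless v m" by blast
  show ?case
  proof (cases "dlless m x")
    case True
    have "\<forall>v\<in>insert x F. v \<noteq> x \<longrightarrow> dlless v x"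
    proof (intro ballI impI)
      fix v assume "v \<in> insert x F" "v \<noteq> x"
      then have "v \<in> F" by simp
      show "dlless v x"
      proof (cases "v = m")
        case True then show ?thesis using \<open>dlless m x\<close> by simp
      next
        case False then show ?thesis using m(2) \<open>v \<in> F\<close> \<open>dlless m x\<close> dl_trans by blast
      qed
    qed
    then show ?thesis by blast
  next
    case False
    then have "x \<noteq> m \<longrightarrow> dlless x m" using dl_total by blast
    then have "\<forall>v\<in>insert x F. v \<noteq> m \<longrightarrow> dlless v m" using m(2) by blast
    then show ?thesis using m(1) by blast
  qed
qed

lemma lead_char:
  assumes "u \<in> Poly_Mapping.keys p" "\<forall>v\<in>Poly_Mapping.keys p. v \<noteq> u \<longrightarrow> dlless v u"
  shows "lead p = u"
  unfolding lead_def
proof (rule the_equality)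
  show "u \<in> Poly_Mapping.keys p \<and> (\<forall>v\<in>Poly_Mapping.keys p. v \<noteq> u \<longrightarrow> dlless v u)"
    using assms by (rule conjI)
next
  fix u' assume h: "u' \<in> Poly_Mapping.keys p \<and> (\<forall>v\<in>Poly_Mapping.keys p. v \<noteq> u' \<longrightarrow> dlless v u')"
  show "u' = u"
  proof (rule ccontr)
    assume ne: "u' \<noteq> u"
    have 1: "dlless u' u" using assms(2) h ne by simp
    have 2: "dlless u u'" using assms(1) h ne by simp
    show False using dl_asym[OF 1] 2 by simp
  qed
qed

lemma lead_prop:
  assumes "p \<noteq> 0"
  shows "lead p \<in> Poly_Mapping.keys p" "\<forall>v\<in>Poly_Mapping.keys p. v \<noteq> lead p \<longrightarrow> dlless v (lead p)"
proof -
  have "Poly_Mapping.keys p \<noteq> {}" using assms by simp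
  then obtain m where m1: "m \<in> Poly_Mapping.keys p" and m2: "\<forall>v\<in>Poly_Mapping.keys p. v \<noteq> m \<longrightarrow> dlless v m"
    using dl_max_exists[OF finite_keys] by blast
  have e: "lead p = m" using m1 m2 by (rule lead_char)
  show "lead p \<in> Poly_Mapping.keys p" unfolding e by (rule m1)
  show "\<forall>v\<in>Poly_Mapping.keys p. v \<noteq> lead p \<longrightarrow> dlless v (lead p)" unfolding e by (rule m2)
qed

lemma wmulc_alt:
  assumes "finite S" "Poly_Mapping.keys p \<subseteq> S"
  shows "wmulc c a p b = (\<Sum>u\<in>S. Poly_Mapping.single (a @ u @ b) (c * Poly_Mapping.lookup p u))"
  unfolding wmulc_def
  by (rule sum.mono_neutral_left) (use assms in \<open>auto simp: in_keys_iff\<close>)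

lemma wmulc_add: "wmulc c a (p + q) b = wmulc c a p b + (wmulc c a q b :: 'k::comm_ring_1 fa)"
proof -
  let ?S = "Poly_Mapping.keys p \<union> Poly_Mapping.keys q"
  have f: "finite ?S" by simp
  have "wmulc c a (p + q) b = (\<Sum>u\<in>?S. Poly_Mapping.single (a @ u @ b) (c * Poly_Mapping.lookup (p+q) u))"
    by (rule wmulc_alt[OF f keys_add])
  also have "\<dots> = (\<Sum>u\<in>?S. Poly_Mapping.single (a @ u @ b) (c * Poly_Mapping.lookup p u)) +
     (\<Sum>u\<in>?S. Poly_Mapping.single (a @ u @ b) (c * Poly_Mapping.lookup q u))"
    by (simp add: lookup_add distrib_left single_add sum.distrib)
  also have "\<dots> = wmulc c a p b + wmulc c a q b"
    by (simp add: wmulc_alt[OF f])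
  finally show ?thesis .
qed

lemma wmulc_zero[simp]: "wmulc c a 0 b = 0" by (simp add: wmulc_def)

lemma wmulc_uminus: "wmulc c a (- p) b = - (wmulc c a p b :: 'k::comm_ring_1 fa)"
  by (simp add: wmulc_def single_uminus sum_negf)

lemma wmulc_diff: "wmulc c a (p - q) b = wmulc c a p b - (wmulc c a q b :: 'k::comm_ring_1 fa)"
  using wmulc_add[of c a p "-q" b] by (simp add: wmulc_uminus)

lemma wmulc_single: "wmulc c a (Poly_Mapping.single u d) b = (Poly_Mapping.single (a @ u @ b) (c * d) :: 'k::comm_ring_1 fa)"
  by (simp add: wmulc_def)

lemma wmulc_sum: "wmulc c a (\<Sum>x\<in>X. f x) b = (\<Sum>x\<in>X. wmulc c a (f x) b :: 'k::comm_ring_1 fa)"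
  by (induction X rule: infinite_finite_induct) (auto simp: wmulc_add)

lemma wmulc_sum_list: "wmulc c a (sum_list xs) b = sum_list (map (\<lambda>x. wmulc c a x b) xs :: 'k::comm_ring_1 fa list)"
  by (induction xs) (auto simp: wmulc_add)

lemma wmulc_wmulc: "wmulc c a (wmulc d a' p b') b = (wmulc (c * d) (a @ a') p (b' @ b) :: 'k::comm_ring_1 fa)"
proof -
  have "wmulc c a (wmulc d a' p b') b = (\<Sum>u\<in>Poly_Mapping.keys p. wmulc c a (Poly_Mapping.single (a' @ u @ b') (d * Poly_Mapping.lookup p u)) b)"
    unfolding wmulc_def[of d a' p b'] by (rule wmulc_sum)
  also have "\<dots> = wmulc (c * d) (a @ a') p (b' @ b)"
    by (simp add: wmulc_single mult.assoc wmulc_def[of "c*d"])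
  finally show ?thesis .
qed




lemma wdeg_simps[simp]: "wdeg \<tau> [] = False" "wdeg \<tau> (x # v) = (ldeg \<tau> x \<noteq> wdeg \<tau> v)"
  by (auto simp: wdeg_def)

lemma sgnk_False[simp]: "sgnk False = 1" by (simp add: sgnk_def)
lemma sgnk_nz[simp]: "sgnk b \<noteq> (0::'k::field)" by (simp add: sgnk_def)

lemma tt_expand: "tt \<tau> k j = Poly_Mapping.single [E k, F j] 1 - Poly_Mapping.single [F j, E k] (sgnk (k \<in> \<tau> \<and> j \<in> \<tau>))
   - (if k = j then Poly_Mapping.single [H k] 1 else (0::'k::comm_ring_1 fa))"
  by (simp add: tt_def sbr_def mon_def)

lemma tt_lead: "lead (tt \<tau> k j :: 'k::field fa) = [E k, F j]"
proof (rule lead_char)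
  show "[E k, F j] \<in> Poly_Mapping.keys (tt \<tau> k j :: 'k fa)"
    by (simp add: tt_expand in_keys_iff lookup_minus lookup_single)
  show "\<forall>v\<in>Poly_Mapping.keys (tt \<tau> k j :: 'k fa). v \<noteq> [E k, F j] \<longrightarrow> dlless v [E k, F j]"
  proof (intro ballI impI)
    fix v assume v: "v \<in> Poly_Mapping.keys (tt \<tau> k j :: 'k fa)" "v \<noteq> [E k, F j]"
    have "v = [F j, E k] \<or> v = [H k]"
    proof (rule ccontr)
      assume "\<not> (v = [F j, E k] \<or> v = [H k])"
      then have "Poly_Mapping.lookup (tt \<tau> k j :: 'k fa) v = 0" using v(2)
        by (auto simp: tt_expand lookup_minus lookup_single when_def)
      then show False using v(1) by (simp add: in_keys_iff)
    qed
    then show "dlless v [E k, F j]" by (auto simp: dlless_def lless_def)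
  qed
qed

fun Lw :: "nat set \<Rightarrow> nat \<Rightarrow> word \<Rightarrow> ('k::comm_ring_1 \<times> word \<times> 'k fa \<times> word) list" where
  "Lw \<tau> j [] = []"
| "Lw \<tau> j (x # v) = (sgnk (j \<in> \<tau> \<and> wdeg \<tau> v), [], tt \<tau> (lidx x) j, v)
     # map (\<lambda>(\<alpha>, a, s, b). (\<alpha>, x # a, s, b)) (Lw \<tau> j v)"

definition ev :: "('k::comm_ring_1 \<times> word \<times> 'k fa \<times> word) \<Rightarrow> 'k fa" where
  "ev t = (case t of (\<alpha>, a, s, b) \<Rightarrow> wmulc \<alpha> a s b)"

lemma sgnk_mult: "sgnk (a \<and> b) * sgnk (a \<and> c) = (sgnk (a \<and> (b \<noteq> c)) :: 'k::comm_ring_1)"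
  by (auto simp: sgnk_def)

lemma Lw_ident:
  assumes "\<forall>x\<in>set v. isE x"
  shows "Poly_Mapping.single (v @ [F j]) 1 - Poly_Mapping.single (F j # v) (sgnk (j \<in> \<tau> \<and> wdeg \<tau> v))
     - dsubw \<tau> j v = sum_list (map ev (Lw \<tau> j v) :: 'k::comm_ring_1 fa list)"
  using assms
proof (induction v)
  case Nil then show ?case by simp
next
  case (Cons x v)
  then obtain k where x: "x = E k" by (cases x) auto
  have IH: "Poly_Mapping.single (v @ [F j]) 1 - Poly_Mapping.single (F j # v) (sgnk (j \<in> \<tau> \<and> wdeg \<tau> v))
     - dsubw \<tau> j v = sum_list (map ev (Lw \<tau> j v) :: 'k fa list)" using Cons by simp
  have m: "map ev (map (\<lambda>(\<alpha>, a, s, b). (\<alpha>, x # a, s, b)) (Lw \<tau> j v)) = map (\<lambda>t. wmulc 1 [x] (ev t) []) (Lw \<tau> j v :: ('k \<times> _) list)"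
    by (auto simp: ev_def wmulc_wmulc)
  have "sum_list (map ev (Lw \<tau> j (x # v)) :: 'k fa list) =
     wmulc (sgnk (j \<in> \<tau> \<and> wdeg \<tau> v)) [] (tt \<tau> k j) v + wmulc 1 [x] (sum_list (map ev (Lw \<tau> j v))) []"
    by (simp only: Lw.simps list.map sum_list.Cons m) (simp add: ev_def x wmulc_sum_list comp_def)
  also have "\<dots> = wmulc (sgnk (j \<in> \<tau> \<and> wdeg \<tau> v)) [] (tt \<tau> k j) v +
     wmulc 1 [x] (Poly_Mapping.single (v @ [F j]) 1 - Poly_Mapping.single (F j # v) (sgnk (j \<in> \<tau> \<and> wdeg \<tau> v))
     - dsubw \<tau> j v) []" by (simp add: IH)
  also have "\<dots> = Poly_Mapping.single ((x # v) @ [F j]) 1 - Poly_Mapping.single (F j # x # v) (sgnk (j \<in> \<tau> \<and> wdeg \<tau> (x # v)))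
     - dsubw \<tau> j (x # v)"
    by (simp add: x tt_expand wmulc_diff wmulc_single wmulc_add mult.commute) (auto simp: sgnk_def)
  finally show ?case by simp
qed




lemma Lw_mem: "t \<in> set (Lw \<tau> j v :: ('k::comm_ring_1 \<times> _) list) \<Longrightarrow>
  \<exists>v1 x v2. v = v1 @ x # v2 \<and> t = (sgnk (j \<in> \<tau> \<and> wdeg \<tau> v2), v1, tt \<tau> (lidx x) j, v2)"
proof (induction v arbitrary: t)
  case Nil then show ?case by simp
next
  case (Cons y v)
  show ?case
  proof (cases "t = (sgnk (j \<in> \<tau> \<and> wdeg \<tau> v), [], tt \<tau> (lidx y) j, v)")
    case True then show ?thesis by (intro exI[of _ "[]"] exI[of _ y] exI[of _ v]) simp
  next
    case False
    then obtain t' where t': "t' \<in> set (Lw \<tau> j v :: ('k \<times> _) list)" "t = (case t' of (\<alpha>, a, s, b) \<Rightarrow> (\<alpha>, y # a, s, b))"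
      using Cons.prems by auto
    from Cons.IH[OF t'(1)] obtain v1 x v2 where "v = v1 @ x # v2" "t' = (sgnk (j \<in> \<tau> \<and> wdeg \<tau> v2), v1, tt \<tau> (lidx x) j, v2)"
      by blast
    then show ?thesis using t'(2) by (intro exI[of _ "y # v1"] exI[of _ x] exI[of _ v2]) simp
  qed
qed

lemma Lw_snoc: "\<exists>M :: ('k::comm_ring_1 \<times> word \<times> 'k fa \<times> word) list. Lw \<tau> j (u @ [x]) = M @ [(1, u, tt \<tau> (lidx x) j, [])] \<and>
  (\<forall>t\<in>set M. \<exists>v1 y v2. u @ [x] = v1 @ y # v2 \<and> v2 \<noteq> [] \<and> t = (sgnk (j \<in> \<tau> \<and> wdeg \<tau> v2), v1, tt \<tau> (lidx y) j, v2))"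
proof (induction u)
  case Nil
  show ?case by (intro exI[of _ "[]"]) simp
next
  case (Cons z u)
  then obtain M :: "('k \<times> word \<times> 'k fa \<times> word) list" where M: "Lw \<tau> j (u @ [x]) = M @ [(1, u, tt \<tau> (lidx x) j, [])]"
    "\<forall>t\<in>set M. \<exists>v1 y v2. u @ [x] = v1 @ y # v2 \<and> v2 \<noteq> [] \<and> t = (sgnk (j \<in> \<tau> \<and> wdeg \<tau> v2), v1, tt \<tau> (lidx y) j, v2)"
    by blast
  let ?M = "(sgnk (j \<in> \<tau> \<and> wdeg \<tau> (u @ [x])), [], tt \<tau> (lidx z) j, u @ [x]) # map (\<lambda>(\<alpha>, a, s, b). (\<alpha>, z # a, s, b)) M"
  have "Lw \<tau> j ((z # u) @ [x]) = ?M @ [(1, z # u, tt \<tau> (lidx x) j, [])]"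
    by (simp add: M(1))
  moreover have "\<forall>t\<in>set ?M. \<exists>v1 y v2. (z # u) @ [x] = v1 @ y # v2 \<and> v2 \<noteq> [] \<and> t = (sgnk (j \<in> \<tau> \<and> wdeg \<tau> v2), v1, tt \<tau> (lidx y) j, v2)"
  proof
    fix t assume "t \<in> set ?M"
    then consider "t = (sgnk (j \<in> \<tau> \<and> wdeg \<tau> (u @ [x])), [], tt \<tau> (lidx z) j, u @ [x])"
      | t' where "t' \<in> set M" "t = (case t' of (\<alpha>, a, s, b) \<Rightarrow> (\<alpha>, z # a, s, b))" by auto
    then show "\<exists>v1 y v2. (z # u) @ [x] = v1 @ y # v2 \<and> v2 \<noteq> [] \<and> t = (sgnk (j \<in> \<tau> \<and> wdeg \<tau> v2), v1, tt \<tau> (lidx y) j, v2)"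
    proof cases
      case 1 then show ?thesis by (intro exI[of _ "[]"] exI[of _ z] exI[of _ "u @ [x]"]) simp
    next
      case 2
      then obtain v1 y v2 where "u @ [x] = v1 @ y # v2" "v2 \<noteq> []" "t' = (sgnk (j \<in> \<tau> \<and> wdeg \<tau> v2), v1, tt \<tau> (lidx y) j, v2)"
        using M(2) by blast
      then show ?thesis using 2 by (intro exI[of _ "z # v1"] exI[of _ y] exI[of _ v2]) simp
    qed
  qed
  ultimately show ?case by blast
qed

lemma ord_key:
  assumes "\<forall>y\<in>set L. isE y" "length (v1 @ x # v2) = length L"
    "wless (v1 @ x # v2) L \<or> (v1 @ x # v2 = L \<and> v2 \<noteq> [])"
  shows "wless (v1 @ x # F j # v2) (L @ [F j])"
  using assms
proof (induction v1 arbitrary: L)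
  case Nil
  then obtain y L' where L: "L = y # L'" by (cases L) auto
  show ?case
  proof (cases "x = y")
    case False then show ?thesis using Nil L by auto
  next
    case True
    have "L' \<noteq> []" using Nil L True lless_irrefl by (cases v2) auto
    then obtain z L'' where "L' = z # L''" by (cases L') auto
    moreover have "isE z" using Nil L \<open>L' = z # L''\<close> by auto
    ultimately show ?thesis using L True by (cases z) (auto simp: lless_def)
  qed
next
  case (Cons y v1)
  then obtain z L' where L: "L = z # L'" by (cases L) auto
  show ?case using Cons L by auto
qed

lemma dl_key:
  assumes "\<forall>y\<in>set L. isE y" "v = v1 @ x # v2"
    "dlless v L \<or> (v = L \<and> v2 \<noteq> [])"
  shows "dlless (v1 @ [x, F j] @ v2) (L @ [F j])"
proof (cases "length v < length L")
  case True then show ?thesis using assms by (auto simp: dlless_def)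
next
  case False
  then have "length (v1 @ x # v2) = length L" "wless (v1 @ x # v2) L \<or> (v1 @ x # v2 = L \<and> v2 \<noteq> [])"
    using assms by (auto simp: dlless_def)
  from ord_key[OF assms(1) this] show ?thesis using \<open>length (v1 @ x # v2) = length L\<close>
    by (simp add: dlless_def)
qed

definition good :: "nat \<Rightarrow> 'k::comm_ring_1 fa set \<Rightarrow> word \<Rightarrow> ('k \<times> word \<times> 'k fa \<times> word) \<Rightarrow> bool" where
  "good r S w t = (case t of (\<alpha>, a, s, b) \<Rightarrow> wordX r a \<and> wordX r b \<and> s \<in> S \<and> dlless (a @ lead s @ b) w)"

definition cmb :: "nat \<Rightarrow> 'k::comm_ring_1 fa set \<Rightarrow> word \<Rightarrow> 'k fa \<Rightarrow> bool" where
  "cmb r S w f = (\<exists>L. (\<forall>t\<in>set L. good r S w t) \<and> f = sum_list (map ev L))"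

lemma congr_cmb: "congr r f g S w = cmb r S w (f - g)"
  unfolding congr_def cmb_def good_def ev_def by (simp add: case_prod_beta')

lemma cmb_list: "\<forall>t\<in>set L. good r S w t \<Longrightarrow> cmb r S w (sum_list (map ev L))"
  unfolding cmb_def by blast

lemma cmb_zero: "cmb r S w 0"
  using cmb_list[of "[]"] by simp

lemma cmb_add: "cmb r S w f \<Longrightarrow> cmb r S w g \<Longrightarrow> cmb r S w (f + g)"
  unfolding cmb_def by (metis (no_types, lifting) Un_iff map_append set_append sum_list_append)

lemma cmb_sum: "(\<And>x. x \<in> X \<Longrightarrow> cmb r S w (f x)) \<Longrightarrow> cmb r S w (\<Sum>x\<in>X. f x)"
  by (induction X rule: infinite_finite_induct) (auto simp: cmb_zero cmb_add)




lemma tt_in_W: "k \<in> {1..r} \<Longrightarrow> j \<in> {1..r} \<Longrightarrow> tt \<tau> k j \<in> Wset r \<tau> A"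
  unfolding Wset_def by (rule UnI1, rule UnI1, rule UnI2) blast

lemma wordX_append[simp]: "wordX r (a @ b) = (wordX r a \<and> wordX r b)"
  by (auto simp: wordX_def)
lemma wordX_Cons[simp]: "wordX r (x # b) = (lidx x \<in> {1..r} \<and> wordX r b)"
  by (auto simp: wordX_def)
lemma wordX_Nil[simp]: "wordX r []" by (simp add: wordX_def)

theorem lemma3p1:
  fixes p c :: "'k::field fa" and r :: nat and \<tau> :: "nat set" and A :: "nat \<Rightarrow> nat \<Rightarrow> int"
    and i j :: nat and w :: word
  assumes "(2::'k) \<noteq> 0" and "(3::'k) \<noteq> 0"
    and "gcm r \<tau> A"
    and "i \<in> {1..r}" and "j \<in> {1..r}"
    and "inAE r p" and "homog \<tau> p" and "monic p"
    and "is_comp p (tt \<tau> i j) w c"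
  shows "congr r c (dsub \<tau> j p) ({p} \<union> Wset r \<tau> A) w"
proof -
  let ?S = "{p} \<union> Wset r \<tau> A"
  have p0: "p \<noteq> 0" and p1: "Poly_Mapping.lookup p (lead p) = 1" using assms(8) by (auto simp: monic_def)
  note lp = lead_prop[OF p0]
  have keysE: "\<And>v. v \<in> Poly_Mapping.keys p \<Longrightarrow> wordX r v \<and> (\<forall>x\<in>set v. isE x)"
    using assms(6) by (auto simp: inAE_def)
  have leadE: "\<forall>x\<in>set (lead p). isE x" and leadX: "wordX r (lead p)" using keysE[OF lp(1)] by auto
  obtain d where d: "\<And>v. v \<in> Poly_Mapping.keys p \<Longrightarrow> wdeg \<tau> v = d" using assms(7) by (auto simp: homog_def)
  obtain u where u: "lead p = u @ [E i]" and w: "w = u @ [E i, F j]"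
    and c: "c = wmulc 1 [] p [F j] - wmulc 1 u (tt \<tau> i j) []"
  proof -
    from assms(9) show thesis
      unfolding is_comp_def tt_lead
    proof (elim disjE exE conjE)
      fix a b assume h: "lead p @ a = w" "b @ [E i, F j] = w" "length b < length (lead p)"
        "c = wmulc 1 [] p a - wmulc 1 b (tt \<tau> i j) []"
      have "length (lead p @ a) = length w" "length (b @ [E i, F j]) = length w"
        using h(1,2) by simp_all
      then have la: "length a < 2" using h(3) by simp
      have "a \<noteq> []"
      proof
        assume "a = []"
        then have "lead p = b @ [E i, F j]" using h by simp
        then have "F j \<in> set (lead p)" by simp
        then show False using leadE by fastforce
      qed
      then obtain y where a: "a = [y]" using la by (cases a) auto
      then have "lead p @ [y] = (b @ [E i]) @ [F j]" using h by simp
      then have "lead p = b @ [E i]" "y = F j" by auto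
      then show thesis using that[of b] h a by simp
    next
      fix a b assume h: "lead p = w" "a @ [E i, F j] @ b = w"
      then have "lead p = a @ [E i, F j] @ b" by simp
      then have "F j \<in> set (lead p)" by simp
      then show thesis using leadE by fastforce
    qed
  qed
  define \<sigma> :: 'k where "\<sigma> = sgnk (j \<in> \<tau> \<and> d)"
  define SL where "SL v = map (\<lambda>(\<beta>, a, s, b). (Poly_Mapping.lookup p v * \<beta>, a, s, b)) (Lw \<tau> j v :: ('k \<times> _) list)" for v
  have E1: "wmulc (Poly_Mapping.lookup p v) [] (Poly_Mapping.single (v @ [F j]) 1 - Poly_Mapping.single (F j # v) (sgnk (j \<in> \<tau> \<and> wdeg \<tau> v))
     - dsubw \<tau> j v) [] = sum_list (map ev (SL v))" if "v \<in> Poly_Mapping.keys p" for v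
  proof -
    have "\<forall>x\<in>set v. isE x" using keysE[OF that] by blast
    have m: "map ev (SL v) = map (\<lambda>t. wmulc (Poly_Mapping.lookup p v) [] (ev t) []) (Lw \<tau> j v)"
      unfolding SL_def map_map by (rule map_cong) (auto simp: ev_def wmulc_wmulc)
    show ?thesis
      unfolding Lw_ident[OF \<open>\<forall>x\<in>set v. isE x\<close>, of j \<tau>] m wmulc_sum_list map_map comp_def ..
    
  qed
  have E2: "wmulc 1 [] p [F j] - wmulc \<sigma> [F j] p [] - dsub \<tau> j p =
     (\<Sum>v\<in>Poly_Mapping.keys p. sum_list (map ev (SL v)))"
  proof -
    have pt: "wmulc (Poly_Mapping.lookup p v) [] (Poly_Mapping.single (v @ [F j]) 1 - Poly_Mapping.single (F j # v) \<sigma>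
     - dsubw \<tau> j v) [] = Poly_Mapping.single ([] @ v @ [F j]) (1 * Poly_Mapping.lookup p v)
      - Poly_Mapping.single ([F j] @ v @ []) (\<sigma> * Poly_Mapping.lookup p v)
      - wmulc (Poly_Mapping.lookup p v) [] (dsubw \<tau> j v) []" for v
      by (simp add: wmulc_diff wmulc_single mult.commute)
    have "(\<Sum>v\<in>Poly_Mapping.keys p. sum_list (map ev (SL v))) =
      (\<Sum>v\<in>Poly_Mapping.keys p. wmulc (Poly_Mapping.lookup p v) [] (Poly_Mapping.single (v @ [F j]) 1 - Poly_Mapping.single (F j # v) \<sigma>
     - dsubw \<tau> j v) [])"
      by (rule sum.cong) (auto simp: E1[symmetric] d \<sigma>_def)
    also have "\<dots> = (\<Sum>v\<in>Poly_Mapping.keys p. Poly_Mapping.single ([] @ v @ [F j]) (1 * Poly_Mapping.lookup p v))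
      - (\<Sum>v\<in>Poly_Mapping.keys p. Poly_Mapping.single ([F j] @ v @ []) (\<sigma> * Poly_Mapping.lookup p v))
      - (\<Sum>v\<in>Poly_Mapping.keys p. wmulc (Poly_Mapping.lookup p v) [] (dsubw \<tau> j v) [])"
      unfolding pt sum_subtractf ..
    also have "\<dots> = wmulc 1 [] p [F j] - wmulc \<sigma> [F j] p [] - dsub \<tau> j p"
      by (simp only: wmulc_def dsub_def)
    finally show ?thesis by simp
  qed
  obtain M :: "('k \<times> word \<times> 'k fa \<times> word) list" where M: "Lw \<tau> j (u @ [E i]) = M @ [(1, u, tt \<tau> i j, [])]"
    "\<forall>t\<in>set M. \<exists>v1 y v2. u @ [E i] = v1 @ y # v2 \<and> v2 \<noteq> [] \<and> t = (sgnk (j \<in> \<tau> \<and> wdeg \<tau> v2), v1, tt \<tau> (lidx y) j, v2)"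
    using Lw_snoc[of \<tau> j u "E i"] by auto
  have idm: "map (\<lambda>(\<beta>, a, s, b). (1 * \<beta>, a, s, b)) xs = xs" for xs :: "('k \<times> word \<times> 'k fa \<times> word) list"
    by (induction xs) auto
  have SLl: "SL (lead p) = M @ [(1, u, tt \<tau> i j, [])]"
    unfolding SL_def p1 using M(1) u idm by simp
  have SLlead: "sum_list (map ev (SL (lead p))) = sum_list (map ev M) + wmulc 1 u (tt \<tau> i j) []"
    unfolding SLl by (simp add: ev_def)
  have main: "c - dsub \<tau> j p = ev (\<sigma>, [F j], p, []) + (\<Sum>v\<in>Poly_Mapping.keys p - {lead p}. sum_list (map ev (SL v)))
      + sum_list (map ev M)"
  proof -
    have ab1: "\<And>(P::'k fa) Q D U s. P - U - D = (P - s - D) + s - U" by (simp add: algebra_simps)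
    have ab2: "\<And>(X::'k fa) U A s. (X + U + A) + s - U = s + A + X" by (simp add: algebra_simps)
    have spl: "(\<Sum>v\<in>Poly_Mapping.keys p. sum_list (map ev (SL v))) =
       sum_list (map ev (SL (lead p))) + (\<Sum>v\<in>Poly_Mapping.keys p - {lead p}. sum_list (map ev (SL v)))"
      using lp(1) by (simp add: sum.remove)
    have "c - dsub \<tau> j p = (wmulc 1 [] p [F j] - wmulc \<sigma> [F j] p [] - dsub \<tau> j p) + wmulc \<sigma> [F j] p [] - wmulc 1 u (tt \<tau> i j) []"
      unfolding c by (rule ab1)
    also have "\<dots> = (sum_list (map ev M) + wmulc 1 u (tt \<tau> i j) [] + (\<Sum>v\<in>Poly_Mapping.keys p - {lead p}. sum_list (map ev (SL v))))
       + wmulc \<sigma> [F j] p [] - wmulc 1 u (tt \<tau> i j) []"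
      unfolding E2 spl SLlead ..
    also have "\<dots> = wmulc \<sigma> [F j] p [] + (\<Sum>v\<in>Poly_Mapping.keys p - {lead p}. sum_list (map ev (SL v))) + sum_list (map ev M)"
      by (rule ab2)
    finally show ?thesis by (simp add: ev_def)
  qed
  have leadp_pre: "\<forall>y\<in>set (lead p). isE y" by (rule leadE)
  have g1: "good r ?S w (\<sigma>, [F j], p, [])"
  proof -
    have "wless (F j # u @ [E i]) (u @ [E i, F j])"
    proof (cases u)
      case Nil then show ?thesis by (simp add: lless_def)
    next
      case (Cons y u')
      then have "isE y" using leadE unfolding u by simp
      then obtain k where "y = E k" by (cases y) auto
      then show ?thesis using Cons by (simp add: lless_def)
    qed
    then show ?thesis using assms(5) unfolding good_def by (simp add: dlless_def u w)
  qed
  have gt: "good r ?S w (\<beta>, v1, tt \<tau> (lidx x) j, v2)"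
    if hh: "v \<in> Poly_Mapping.keys p" "v = v1 @ x # v2" "dlless v (lead p) \<or> (v = lead p \<and> v2 \<noteq> [])" for v v1 x v2 \<beta>
  proof -
    have vE: "\<forall>y\<in>set v. isE y" and vX: "wordX r v" using keysE[OF hh(1)] by auto
    then obtain k where x: "x = E k" using hh(2) by (cases x) auto
    have k: "k \<in> {1..r}" using vX hh(2) x by simp
    have "dlless (v1 @ [x, F j] @ v2) (lead p @ [F j])" by (rule dl_key[OF leadE hh(2,3)])
    then show ?thesis using vX hh(2) x k assms(5) tt_in_W[OF k assms(5)]
      unfolding good_def by (simp add: tt_lead u w tt_in_W[OF k assms(5)])
  qed
  have c1: "cmb r ?S w (ev (\<sigma>, [F j], p, []))"
    using cmb_list[of "[(\<sigma>, [F j], p, [])]"] g1 by simp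
  have c2: "cmb r ?S w (\<Sum>v\<in>Poly_Mapping.keys p - {lead p}. sum_list (map ev (SL v)))"
  proof (rule cmb_sum, rule cmb_list)
    fix v assume v: "v \<in> Poly_Mapping.keys p - {lead p}"
    show "\<forall>t\<in>set (SL v). good r ?S w t"
    proof
      fix t assume "t \<in> set (SL v)"
      then obtain t' where t': "t' \<in> set (Lw \<tau> j v :: ('k \<times> _) list)" "t = (case t' of (\<beta>, a, s, b) \<Rightarrow> (Poly_Mapping.lookup p v * \<beta>, a, s, b))"
        unfolding SL_def by auto
      from Lw_mem[OF t'(1)] obtain v1 x v2 where "v = v1 @ x # v2" "t' = (sgnk (j \<in> \<tau> \<and> wdeg \<tau> v2), v1, tt \<tau> (lidx x) j, v2)"
        by blast
      then show "good r ?S w t" using gt[of v v1 x v2] v lp(2) t'(2) by auto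
    qed
  qed
  have c3: "cmb r ?S w (sum_list (map ev M))"
  proof (rule cmb_list, rule ballI)
    fix t assume "t \<in> set M"
    then obtain v1 y v2 where "u @ [E i] = v1 @ y # v2" "v2 \<noteq> []" "t = (sgnk (j \<in> \<tau> \<and> wdeg \<tau> v2), v1, tt \<tau> (lidx y) j, v2)"
      using M(2) by blast
    then show "good r ?S w t" using gt[of "lead p" v1 y v2] lp(1) u by simp
  qed
  show ?thesis unfolding congr_cmb main using c1 c2 c3 by (intro cmb_add)
qed


end
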